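(* Let $q$ be a prime power, $e\ge 2$ even, $r$ a positive integer, $a\in\mathbb{F}_{q^e}$ with $a\neq 0$, $f(x)=x^r(x^{q-1}+a)$, and $\ell=q^{e-1}+\cdots+q+1$. If $r\bmod\ell=hq+1$ for an integer $h$ with $q+1\nmid h$, then $f(x)$ does not permute $\mathbb{F}_{q^e}$.
   Context: $r\bmod\ell$ denotes the least nonnegative residue of $r$ modulo $\ell$. *)

theory Defs
  imports "HOL-Computational_Algebra.Primes"
begin

definition prime_power :: "nat \<Rightarrow> bool" where
  "prime_power q \<longleftrightarrow> (\<exists>p k. prime p \<and> k \<ge> 1 \<and> q = p ^ k)"

end

theory Submission imports Defs "HOL-Computational_Algebra.Primes" "HOL-Computational_Algebra.Polynomial" "HOL-Library.FuncSet" "HOL-Number_Theory.Residues"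
begin

lemma ff_pow_card1:
  fixes x :: "'a :: {field, finite}"
  assumes "x \<noteq> 0"
  shows "x ^ (card (UNIV::'a set) - 1) = 1"
proof -
  have "x * (\<Prod>y\<in>UNIV-{0}. x * y) = x * x ^ (card (UNIV :: 'a set) - 1) * \<Prod>(UNIV-{0})"
    by (simp add: prod.distrib mult_ac)
  moreover have "(\<Prod>y\<in>UNIV-{0}. x * y) = (\<Prod>y\<in>UNIV-{0}. (y::'a))"
    by (rule prod.reindex_bij_witness[of _ "\<lambda>y. y / x" "\<lambda>y. x * y"]) (use assms in auto)
  moreover have "\<Prod>(UNIV-{0::'a}) \<noteq> 0" by simp
  ultimately show ?thesis using assms by simp
qed

lemma ff_exists_ne1:
  fixes dummy :: "'a :: {field, finite}"
  assumes "0 < k" "k < card (UNIV::'a set) - 1"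
  shows "\<exists>c::'a. c \<noteq> 0 \<and> c ^ k \<noteq> 1"
proof (rule ccontr)
  assume "\<not> ?thesis"
  hence "UNIV - {0} \<subseteq> {x::'a. poly (Polynomial.monom 1 k - 1) x = 0}"
    by (auto simp: poly_monom)
  hence "card (UNIV - {0::'a}) \<le> card {x::'a. poly (Polynomial.monom 1 k - 1) x = 0}"
    by (intro card_mono) auto
  also have "\<dots> \<le> degree (Polynomial.monom (1::'a) k - 1)"
  proof (rule card_poly_roots_bound)
    show "Polynomial.monom (1::'a) k - 1 \<noteq> 0"
    proof
      assume "Polynomial.monom (1::'a) k - 1 = 0"
      hence "Polynomial.coeff (Polynomial.monom (1::'a) k - 1) k = 0" by simp
      thus False using assms by simp
    qed
  qed
  also have "degree (Polynomial.monom (1::'a) k - 1) \<le> k"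
    by (metis degree_diff_le degree_monom_le degree_1 le0)
  finally show False using assms by (simp add: card_Diff_singleton)
qed

lemma ff_sum_pow:
  fixes dummy :: "'a :: {field, finite}"
  assumes "0 < k"
  shows "(\<Sum>x\<in>(UNIV::'a set). x ^ k) = (if (card (UNIV::'a set) - 1) dvd k then -1 else 0)"
proof (cases "(card (UNIV::'a set) - 1) dvd k")
  case True
  then obtain j where j: "k = (card (UNIV::'a set) - 1) * j" by blast
  have "(\<Sum>x\<in>(UNIV::'a set). x ^ k) = (\<Sum>x\<in>UNIV - {0::'a}. x ^ k)"
    using assms by (intro sum.mono_neutral_right) auto
  also have "\<dots> = (\<Sum>x\<in>UNIV - {0::'a}. 1)"
    by (intro sum.cong refl) (metis j power_mult ff_pow_card1 power_one DiffE singletonI)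
  also have "\<dots> = of_nat (card (UNIV::'a set) - 1)" by (simp add: card_Diff_singleton)
  also have "\<dots> = of_nat (card (UNIV::'a set)) - 1"
    using finite_UNIV_card_ge_0[where ?'a='a] by (simp add: of_nat_diff)
  also have "of_nat (card (UNIV::'a set)) = (0::'a)"
    using CHAR_dvd_CARD[where ?'a='a] of_nat_eq_0_iff_char_dvd by blast
  finally show ?thesis using True by simp
next
  case False
  define k' where "k' = k mod (card (UNIV::'a set) - 1)"
  have "k' \<noteq> 0" using False by (simp add: k'_def mod_eq_0_iff_dvd)
  moreover have "card {0::'a, 1} \<le> card (UNIV::'a set)" by (intro card_mono) auto
  hence "card (UNIV::'a set) - 1 > 0" by simp
  hence "k' < card (UNIV::'a set) - 1" unfolding k'_def by simp
  ultimately obtain c :: 'a where c: "c \<noteq> 0" "c ^ k' \<noteq> 1"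
    using ff_exists_ne1[of k'] by auto
  have ck: "c ^ k = c ^ k'"
  proof -
    have "k = (card (UNIV::'a set) - 1) * (k div (card (UNIV::'a set) - 1)) + k'" by (simp add: k'_def)
    hence "c ^ k = (c ^ (card (UNIV::'a set) - 1)) ^ (k div (card (UNIV::'a set) - 1)) * c ^ k'"
      by (metis power_add power_mult)
    thus ?thesis using ff_pow_card1[OF c(1)] by simp
  qed
  have "(\<Sum>x\<in>(UNIV::'a set). x ^ k) = (\<Sum>x\<in>(UNIV::'a set). (c * x) ^ k)"
    by (rule sum.reindex_bij_witness[of _ "\<lambda>y. c * y" "\<lambda>y. y / c"]) (use c in auto)
  also have "\<dots> = c ^ k * (\<Sum>x\<in>(UNIV::'a set). x ^ k)"
    by (simp add: power_mult_distrib sum_distrib_left)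
  finally have "(1 - c ^ k) * (\<Sum>x\<in>(UNIV::'a set). x ^ k) = 0" by (simp add: algebra_simps)
  thus ?thesis using False c ck by simp
qed

lemma geom_frob:
  fixes w b :: "'a :: field"
  assumes q: "q \<ge> 2" and q0: "of_nat q = (0::'a)"
    and frob: "\<And>u v::'a. (u + v) ^ q = u ^ q + v ^ q"
  shows "(w + b) ^ (q - 1) = (\<Sum>j<q. w ^ j * (- b) ^ (q - 1 - j))"
proof -
  have "b ^ q + (- b) ^ q = 0"
    using frob[of b "-b"] q by (simp add: power_0_left)
  hence nb: "(- b) ^ q = - (b ^ q)"
    by (metis add.commute add_eq_0_iff)
  have "w ^ q - (- b) ^ q = (w - (- b)) * (\<Sum>i<q. (- b) ^ (q - Suc i) * w ^ i)"
    by (rule power_diff_sumr2)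
  hence eq: "(w + b) ^ q = (w + b) * (\<Sum>j<q. w ^ j * (- b) ^ (q - 1 - j))"
    using frob[of w b] nb by (simp add: mult.commute)
  show ?thesis
  proof (cases "w + b = 0")
    case False
    have "(w + b) ^ q = (w + b) * (w + b) ^ (q - 1)"
      using q by (metis Suc_diff_1 less_le_trans pos2 power_Suc)
    with eq False show ?thesis by simp
  next
    case True
    hence bw: "- b = w" by (simp add: add_eq_0_iff)
    have "(\<Sum>j<q. w ^ j * (- b) ^ (q - 1 - j)) = (\<Sum>j<q. w ^ (q - 1))"
      unfolding bw by (intro sum.cong refl) (auto simp flip: power_add)
    also have "\<dots> = of_nat q * w ^ (q - 1)" by simp
    finally show ?thesis using True q q0 by simp
  qed
qed

lemma digits_bound:
  fixes B :: nat
  assumes "\<And>i. i < m \<Longrightarrow> J i < B"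
  shows "(\<Sum>i<m. B ^ i * J i) < B ^ m"
  using assms
proof (induction m)
  case 0 then show ?case by simp
next
  case (Suc m)
  have "(\<Sum>i<Suc m. B ^ i * J i) = (\<Sum>i<m. B ^ i * J i) + B ^ m * J m" by simp
  also have "\<dots> < B ^ m + B ^ m * J m" using Suc by simp
  also have "\<dots> = B ^ m * (J m + 1)" by (simp add: algebra_simps)
  also have "\<dots> \<le> B ^ m * B" using Suc.prems[of m] by (intro mult_le_mono2) auto
  finally show ?case by (simp add: mult.commute)
qed

lemma digits_inj:
  fixes B :: nat
  assumes "\<And>i. i < m \<Longrightarrow> J i < B" "\<And>i. i < m \<Longrightarrow> J' i < B"
    and "(\<Sum>i<m. B ^ i * J i) = (\<Sum>i<m. B ^ i * J' i)"
  shows "\<forall>i<m. J i = J' i"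
  using assms
proof (induction m)
  case 0 then show ?case by simp
next
  case (Suc m)
  let ?S = "\<Sum>i<m. B ^ i * J i" and ?S' = "\<Sum>i<m. B ^ i * J' i"
  have b1: "?S < B ^ m" and b2: "?S' < B ^ m" using Suc.prems by (auto intro!: digits_bound)
  have e: "?S + B ^ m * J m = ?S' + B ^ m * J' m" using Suc.prems(3) by simp
  hence "(?S + B ^ m * J m) div B ^ m = (?S' + B ^ m * J' m) div B ^ m" by simp
  moreover have "B ^ m \<noteq> 0" using b1 by (metis not_less_zero)
  ultimately have jm: "J m = J' m" using b1 b2 by simp
  with e have "?S = ?S'" by simp
  with Suc.IH[OF _ _ this] Suc.prems jm show ?case by (auto simp: less_Suc_eq)
qed

lemma geom_nat: "((q::nat) - 1) * (\<Sum>i<n. q ^ i) = q ^ n - 1"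
proof (cases "q = 0")
  case True then show ?thesis by (cases n) auto
next
  case False
  show ?thesis
  proof (induction n)
    case 0 then show ?case by simp
  next
    case (Suc n)
    have "(q - 1) * (\<Sum>i<Suc n. q ^ i) = (q ^ n - 1) + (q - 1) * q ^ n"
      using Suc by (simp add: algebra_simps)
    also have "\<dots> = q ^ Suc n - 1" using False
      by (simp add: algebra_simps diff_mult_distrib)
    finally show ?case .
  qed
qed

lemma sum_even_split: "(\<Sum>i<2*m. (q::nat) ^ i) = (q + 1) * (\<Sum>i<m. (q^2) ^ i)"
proof (induction m)
  case (Suc m)
  have "q ^ (m * 2) = q ^ m * q ^ m" by (simp add: mult_2_right power_add)
  with Suc show ?case by (simp add: algebra_simps power_mult[symmetric] power2_eq_square)
qed simp

theorem proposition4p2: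
  fixes a :: "'a :: {field, finite}"
    and q e r :: nat and h :: int
  assumes "prime_power q"
    and "card (UNIV :: 'a set) = q ^ e"
    and "even e" and "e \<ge> 2"
    and "r > 0"
    and "a \<noteq> 0"
    and "int (r mod (\<Sum>i<e. q ^ i)) = h * int q + 1"
    and "\<not> (int q + 1) dvd h"
  shows "\<not> bij (\<lambda>x :: 'a. x ^ r * (x ^ (q - 1) + a))"
proof
  define F where "F = (\<lambda>x :: 'a. x ^ r * (x ^ (q - 1) + a))"
  assume bijF: "bij (\<lambda>x :: 'a. x ^ r * (x ^ (q - 1) + a))"
  obtain p k where p: "prime p" "k \<ge> 1" "q = p ^ k"
    using assms(1) unfolding prime_power_def by auto
  have fin: "finite (UNIV :: 'a set)" by simp
  have cpos: "CHAR('a) > 0" using finite_imp_CHAR_pos[OF fin] .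
  have cp: "prime CHAR('a)" using prime_CHAR_semidom[OF cpos] .
  have "CHAR('a) dvd p ^ (k * e)"
    using CHAR_dvd_CARD[where ?'a='a] assms(2) p by (simp add: power_mult)
  hence "CHAR('a) dvd p" using prime_dvd_power cp by blast
  hence cpeq: "CHAR('a) = p" using primes_dvd_imp_eq cp p(1) by blast
  have frob: "(u + v) ^ (q ^ n) = u ^ (q ^ n) + v ^ (q ^ n)" for u v :: 'a and n
  proof -
    have "q ^ n = CHAR('a) ^ (k * n)" by (simp add: cpeq p(3) power_mult)
    then show ?thesis by (rule freshmans_dream'[OF cp])
  qed
  have q0: "of_nat q = (0::'a)"
    using p by (simp add: of_nat_eq_0_iff_char_dvd cpeq)
  have "p \<ge> 2" using p(1) prime_ge_2_nat by blast
  moreover have "p \<le> p ^ k" using \<open>p \<ge> 2\<close> p(2) by (simp add: self_le_power)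
  ultimately have q2: "q \<ge> 2" using p(3) by linarith
  have frob1: "(u + v) ^ q = u ^ q + v ^ q" for u v :: 'a
    using frob[of u v 1] by simp
  define m where "m = e div 2"
  have em: "e = 2 * m" using assms(3) by (simp add: m_def)
  have m1: "m \<ge> 1" using assms(4) em by simp
  define s where "s = (\<Sum>i<m. (q^2) ^ i)"
  define l where "l = (\<Sum>i<e. q ^ i)"
  have ls: "l = (q + 1) * s" unfolding l_def s_def em by (rule sum_even_split)
  have s1: "s \<ge> 1"
  proof -
    obtain m' where "m = Suc m'" using m1 by (cases m) auto
    thus ?thesis unfolding s_def by (simp del: sum.lessThan_Suc add: sum.lessThan_Suc_shift)
  qed
  have Ql: "card (UNIV :: 'a set) - 1 = (q - 1) * l"
    unfolding l_def assms(2) by (rule geom_nat[symmetric])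
  define t where "t = (q - 1) * s"
  have t0: "t > 0" using q2 s1 by (simp add: t_def)
  have tQ: "t < card (UNIV :: 'a set) - 1"
  proof -
    have "(q - 1) * s * 1 < (q - 1) * s * (q + 1)"
      using q2 s1 by (intro mult_strict_left_mono) auto
    thus ?thesis unfolding Ql ls t_def by (simp add: mult_ac)
  qed
  \<comment> \<open>Hermite: the power sum of a permutation vanishes\<close>
  have "(\<Sum>x\<in>UNIV. F x ^ t) = (\<Sum>y\<in>(UNIV::'a set). y ^ t)"
    using sum.reindex_bij_betw[of F UNIV UNIV "\<lambda>y. y ^ t"] bijF unfolding F_def by simp
  also have "\<dots> = 0"
    using ff_sum_pow[OF t0, where ?'a='a] tQ t0 by (auto dest: nat_dvd_not_less)
  finally have herm: "(\<Sum>x\<in>UNIV. F x ^ t) = 0" .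
  define PI where "PI = PiE {..<m} (\<lambda>_. {..<q})"
  define N where "N = (\<lambda>J. \<Sum>i<m. (q^2) ^ i * J i)"
  define cf where "cf = (\<lambda>i j. (- (a ^ ((q^2) ^ i))) ^ (q - 1 - j))"
  define C where "C = (\<lambda>J. \<Prod>i<m. cf i (J i))"
  have finPI: "finite PI" unfolding PI_def by (simp add: finite_PiE)
  have expand: "F x ^ t = (\<Sum>J\<in>PI. x ^ ((q - 1) * (r * s + N J)) * C J)" for x
  proof -
    have "(x ^ (q - 1) + a) ^ t = ((x ^ (q - 1) + a) ^ s) ^ (q - 1)"
      unfolding t_def by (simp add: power_mult mult.commute)
    also have "(x ^ (q - 1) + a) ^ s = (\<Prod>i<m. (x ^ (q - 1) + a) ^ ((q^2) ^ i))"
      unfolding s_def by (rule power_sum)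
    also have "\<dots> ^ (q - 1) = (\<Prod>i<m. ((x ^ (q - 1) + a) ^ ((q^2) ^ i)) ^ (q - 1))"
      by (rule prod_power_distrib)
    also have "\<dots> = (\<Prod>i<m. \<Sum>j<q. x ^ ((q - 1) * ((q^2) ^ i * j)) * cf i j)"
    proof (intro prod.cong refl)
      fix i
      have "(x ^ (q - 1) + a) ^ ((q^2) ^ i) = (x ^ (q - 1)) ^ ((q^2) ^ i) + a ^ ((q^2) ^ i)"
        using frob[of "x ^ (q - 1)" a "2 * i"] by (simp add: power_mult)
      hence "((x ^ (q - 1) + a) ^ ((q^2) ^ i)) ^ (q - 1)
          = (\<Sum>j<q. ((x ^ (q - 1)) ^ ((q^2) ^ i)) ^ j * (- (a ^ ((q^2) ^ i))) ^ (q - 1 - j))"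
        using geom_frob[OF q2 q0 frob1] by simp
      also have "\<dots> = (\<Sum>j<q. x ^ ((q - 1) * ((q^2) ^ i * j)) * cf i j)"
        unfolding cf_def by (intro sum.cong refl) (simp add: power_mult mult.assoc)
      finally show "((x ^ (q - 1) + a) ^ ((q^2) ^ i)) ^ (q - 1) = \<dots>" .
    qed
    also have "\<dots> = (\<Sum>J\<in>PI. \<Prod>i<m. x ^ ((q - 1) * ((q^2) ^ i * J i)) * cf i (J i))"
      unfolding PI_def by (rule prod_sum_PiE) auto
    also have "\<dots> = (\<Sum>J\<in>PI. x ^ ((q - 1) * N J) * C J)"
    proof (intro sum.cong refl)
      fix J
      have "(\<Prod>i<m. x ^ ((q - 1) * ((q^2) ^ i * J i)) * cf i (J i))
          = (\<Prod>i<m. x ^ ((q - 1) * ((q^2) ^ i * J i))) * C J"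
        unfolding C_def by (rule prod.distrib)
      also have "(\<Prod>i<m. x ^ ((q - 1) * ((q^2) ^ i * J i))) = x ^ (\<Sum>i<m. (q - 1) * ((q^2) ^ i * J i))"
        by (rule power_sum[symmetric])
      also have "(\<Sum>i<m. (q - 1) * ((q^2) ^ i * J i)) = (q - 1) * N J"
        unfolding N_def by (rule sum_distrib_left[symmetric])
      finally show "(\<Prod>i<m. x ^ ((q - 1) * ((q^2) ^ i * J i)) * cf i (J i)) = x ^ ((q - 1) * N J) * C J" .
    qed
    finally have "(x ^ (q - 1) + a) ^ t = (\<Sum>J\<in>PI. x ^ ((q - 1) * N J) * C J)" .
    hence "F x ^ t = x ^ (r * t) * (\<Sum>J\<in>PI. x ^ ((q - 1) * N J) * C J)"
      unfolding F_def by (simp add: power_mult_distrib power_mult)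
    also have "\<dots> = (\<Sum>J\<in>PI. x ^ ((q - 1) * (r * s + N J)) * C J)"
      unfolding sum_distrib_left
      by (intro sum.cong refl) (simp add: t_def power_add algebra_simps)
    finally show ?thesis .
  qed
  have "(\<Sum>x\<in>UNIV. F x ^ t) = (\<Sum>J\<in>PI. C J * (\<Sum>x\<in>(UNIV::'a set). x ^ ((q - 1) * (r * s + N J))))"
    unfolding expand by (subst sum.swap) (simp add: sum_distrib_left mult.commute)
  also have "\<dots> = (\<Sum>J\<in>PI. C J * (if l dvd (r * s + N J) then -1 else 0))"
  proof (intro sum.cong refl)
    fix J
    have pos: "(q - 1) * (r * s + N J) > 0" using q2 s1 assms(5) by simp
    have "(card (UNIV::'a set) - 1 dvd (q - 1) * (r * s + N J)) = (l dvd (r * s + N J))"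
      unfolding Ql using q2 by simp
    thus "C J * (\<Sum>x\<in>(UNIV::'a set). x ^ ((q - 1) * (r * s + N J))) = C J * (if l dvd (r * s + N J) then -1 else 0)"
      using ff_sum_pow[OF pos, where ?'a='a] by simp
  qed
  finally have total: "(\<Sum>x\<in>UNIV. F x ^ t) = (\<Sum>J\<in>PI. C J * (if l dvd (r * s + N J) then -1 else 0))" .
  define c where "c = r mod (q + 1)"
  have c1: "c \<noteq> 1"
  proof
    assume "c = 1"
    have "(q + 1) dvd l" unfolding ls by (rule dvd_triv_left)
    hence "r mod l mod (q + 1) = 1" using \<open>c = 1\<close> by (simp add: c_def mod_mod_cancel)
    moreover have "r mod l = (q + 1) * (r mod l div (q + 1)) + r mod l mod (q + 1)"
      by (metis mult_div_mod_eq)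
    ultimately obtain D where D: "r mod l = (q + 1) * D + 1" by metis
    hence "h * int q = (int q + 1) * int D" using assms(7) unfolding l_def[symmetric] by (simp add: algebra_simps)
    hence "h = (int q + 1) * (h - int D)" by (simp add: algebra_simps)
    thus False using assms(8) by (metis dvd_triv_left)
  qed
  have cq: "c \<le> q" unfolding c_def using less_Suc_eq_le by simp
  define d where "d = (if c = 0 then 0 else q + 1 - c)"
  have dq: "d < q" using c1 cq q2 by (auto simp: d_def)
  have "r = (q + 1) * (r div (q + 1)) + c" unfolding c_def by (metis mult_div_mod_eq)
  hence "r * s = ((q + 1) * (r div (q + 1)) + c) * s" by simp
  also have "\<dots> = (r div (q + 1)) * l + c * s" by (simp add: ls algebra_simps)
  finally have rs: "r * s = (r div (q + 1)) * l + c * s" .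
  have dvd_iff: "l dvd (r * s + N J) \<longleftrightarrow> l dvd (c * s + N J)" for J
    unfolding rs by (simp add: add.assoc)
  have Jlt: "J i < q" if "J \<in> PI" "i < m" for J i using that by (auto simp: PI_def PiE_iff)
  have Nle: "N J \<le> (q - 1) * s" if JP: "J \<in> PI" for J
  proof -
    have jl: "J i \<le> q - 1" if "i \<in> {..<m}" for i using Jlt[OF JP] that by fastforce
    have "N J \<le> (\<Sum>i<m. (q^2) ^ i * (q - 1))"
      unfolding N_def using jl by (intro sum_mono mult_le_mono2)
    also have "\<dots> = (q - 1) * s" unfolding s_def by (simp add: sum_distrib_left mult.commute)
    finally show ?thesis .
  qed
  have lpos: "l > 0" using ls s1 by simp
  have key: "l dvd (c * s + N0) \<longleftrightarrow> N0 = d * s" if N0: "N0 \<le> (q - 1) * s" for N0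
  proof
    assume "l dvd (c * s + N0)"
    then obtain w where w: "c * s + N0 = l * w" by blast
    have "c * s + N0 \<le> q * s + (q - 1) * s" using cq N0 by (intro add_mono mult_le_mono1) auto
    also have "\<dots> < 2 * l" using s1 q2 unfolding ls by (simp add: algebra_simps diff_mult_distrib)
    finally have "l * w < l * 2" using w by simp
    hence "w < 2" using lpos by simp
    hence "w = 0 \<or> w = 1" by auto
    thus "N0 = d * s"
    proof
      assume "w = 0"
      hence "c * s = 0" "N0 = 0" using w by auto
      hence "c = 0" using s1 by simp
      thus ?thesis using \<open>N0 = 0\<close> by (simp add: d_def)
    next
      assume "w = 1"
      hence w1: "c * s + N0 = (q + 1) * s" using w ls by simp
      show ?thesis
      proof (cases "c = 0")
        case True
        hence "N0 = (q + 1) * s" using w1 by simp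
        moreover have "(q - 1) * s < (q + 1) * s" using s1 q2 by (intro mult_strict_right_mono) auto
        ultimately show ?thesis using N0 by simp
      next
        case False
        have "N0 = (q + 1) * s - c * s" using w1 by simp
        also have "\<dots> = (q + 1 - c) * s" by (simp add: diff_mult_distrib)
        finally show ?thesis using False by (simp add: d_def)
      qed
    qed
  next
    assume "N0 = d * s"
    show "l dvd (c * s + N0)"
    proof (cases "c = 0")
      case True thus ?thesis using \<open>N0 = d * s\<close> by (simp add: d_def)
    next
      case False
      have "c * s + N0 = c * s + (q + 1 - c) * s" using False \<open>N0 = d * s\<close> by (simp add: d_def)
      also have "\<dots> = (c + (q + 1 - c)) * s" by (simp add: add_mult_distrib)
      also have "\<dots> = l" using cq ls by simp
      finally show ?thesis by simp
    qed
  qed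
  define J0 where "J0 = restrict (\<lambda>_. d) {..<m}"
  have J0PI: "J0 \<in> PI" unfolding J0_def PI_def using dq by auto
  have NJ0: "N J0 = d * s" unfolding N_def J0_def s_def by (simp add: sum_distrib_left mult.commute)
  have uniq: "l dvd (r * s + N J) \<longleftrightarrow> J = J0" if J: "J \<in> PI" for J
  proof
    assume "l dvd (r * s + N J)"
    hence "N J = N J0" using key[OF Nle[OF J]] dvd_iff NJ0 by simp
    hence "\<forall>i<m. J i = J0 i" unfolding N_def
    proof (intro digits_inj[where B = "q^2"])
      fix i assume i: "i < m"
      have "q < q^2" using q2 by (simp add: power2_eq_square)
      thus "J i < q^2" "J0 i < q^2" using Jlt[OF J i] Jlt[OF J0PI i] by auto
    qed
    thus "J = J0" using J J0PI unfolding PI_def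
      by (intro extensionalityI[where A = "{..<m}"]) (auto simp: PiE_iff)
  next
    assume "J = J0"
    thus "l dvd (r * s + N J)" using dvd_iff[of J0] key[OF Nle[OF J0PI]] NJ0 by simp
  qed
  have "(\<Sum>J\<in>PI. C J * (if l dvd (r * s + N J) then -1 else 0)) = (\<Sum>J\<in>PI. if J = J0 then - C J else 0)"
    by (intro sum.cong refl) (simp add: uniq)
  also have "\<dots> = - C J0" using finPI J0PI by (simp add: sum.delta')
  finally have "C J0 = 0" using total herm by simp
  moreover have "C J0 \<noteq> 0" unfolding C_def cf_def using assms(6) by simp
  ultimately show False by simp
qed

end
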